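(* In $D_n$: (1) $w_L\cdot s_1=s_{1'}\cdot w_L$ for $2\le L\le n-1$; (2) $w_L\cdot s_{1'}=s_1\cdot w_L$ for $2\le L\le n-1$; (3) $w_L\cdot s_k=s_k\cdot w_L$ whenever $2\le k\le L-1$ and $L\le n-1$.
   Context: $D_n$ ($n\ge2$) is the Coxeter group with generators $s_{1'},s_1,\dots,s_{n-1}$ and relations $s^2=1$, $(s_i s_{i+1})^3=1$, $(s_is_j)^2=1$ for $|i-j|\ge 2$, $(s_{1'}s_2)^3=1$, $(s_{1'}s_i)^2=1$ for $i\ne 2$. $w_L=s_L s_{L-1}\cdots s_2 s_1 s_{1'} s_2\cdots s_L$ for $1\le L\le n-1$. *)

theory Defs
  imports Main
begin

text \<open>Generators of the Coxeter group D_n: S' is s_{1'}, S i is s_i (1 <= i <= n-1).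
  Elements of D_n are represented by words (lists of generators); two words represent the
  same element iff they are related by the congruence generated by the Coxeter relators.
  Since all generators are involutions, the monoid presentation below presents the group.\<close>

datatype gen = S' | S nat

type_synonym word = "gen list"

definition valid_gen :: "nat \<Rightarrow> gen \<Rightarrow> bool" where
  "valid_gen n g = (case g of S' \<Rightarrow> True | S i \<Rightarrow> 1 \<le> i \<and> i \<le> n - 1)"

fun cox_m :: "gen \<Rightarrow> gen \<Rightarrow> nat" where
  "cox_m S' S' = 1"
| "cox_m S' (S i) = (if i = 2 then 3 else 2)"
| "cox_m (S i) S' = (if i = 2 then 3 else 2)"
| "cox_m (S i) (S j) = (if i = j then 1 else if i = j + 1 \<or> j = i + 1 then 3 else 2)"

definition relator :: "nat \<Rightarrow> word \<Rightarrow> bool" where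
  "relator n r \<longleftrightarrow> (\<exists>s t. valid_gen n s \<and> valid_gen n t \<and>
      r = concat (replicate (cox_m s t) [s, t]))"

inductive D_eq :: "nat \<Rightarrow> word \<Rightarrow> word \<Rightarrow> bool" for n where
  D_refl: "D_eq n u u"
| D_sym: "D_eq n u v \<Longrightarrow> D_eq n v u"
| D_trans: "D_eq n u v \<Longrightarrow> D_eq n v w \<Longrightarrow> D_eq n u w"
| D_rel: "relator n r \<Longrightarrow> D_eq n (u @ r @ v) (u @ v)"

definition wL :: "nat \<Rightarrow> word" where
  "wL L = map S (rev [2..<L+1]) @ [S 1, S'] @ map S [2..<L+1]"

end

theory Submission
  imports Defs
begin

lemma D_trans'[trans]: "D_eq n a b \<Longrightarrow> D_eq n b c \<Longrightarrow> D_eq n a c"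
  by (rule D_trans)

lemma D_cong: "D_eq n u v \<Longrightarrow> D_eq n (a @ u @ b) (a @ v @ b)"
proof (induction rule: D_eq.induct)
  case (D_refl u) then show ?case by (rule D_eq.D_refl)
next
  case (D_sym u v) then show ?case by (metis D_eq.D_sym)
next
  case (D_trans u v w) then show ?case by (metis D_eq.D_trans)
next
  case (D_rel r u v)
  have "D_eq n ((a @ u) @ r @ (v @ b)) ((a @ u) @ (v @ b))" using D_rel by (rule D_eq.D_rel)
  then show ?case by simp
qed

lemma cox_sym: "cox_m s t = cox_m t s"
  by (cases s; cases t; auto)

lemma cancel: "valid_gen n s \<Longrightarrow> D_eq n (u @ [s, s] @ v) (u @ v)"
proof -
  assume "valid_gen n s"
  moreover have "cox_m s s = 1" by (cases s) auto
  ultimately have "relator n [s, s]" unfolding relator_def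
    by (rule_tac x=s in exI, rule_tac x=s in exI) simp
  then show ?thesis by (rule D_rel)
qed

lemma comm:
  assumes "valid_gen n s" "valid_gen n t" "cox_m s t = 2"
  shows "D_eq n (u @ [s, t] @ v) (u @ [t, s] @ v)"
proof -
  have "relator n [t, s, t, s]" unfolding relator_def using assms cox_sym[of s t]
    by (rule_tac x=t in exI, rule_tac x=s in exI) (simp add: numeral_2_eq_2)
  then have r: "D_eq n ((u @ [t]) @ [t, s, t, s] @ ([s] @ v)) ((u @ [t]) @ ([s] @ v))" by (rule D_rel)
  have a: "D_eq n (u @ [t, t] @ ([s, t, s, s] @ v)) (u @ ([s, t, s, s] @ v))" using assms by (intro cancel)
  have b: "D_eq n ((u @ [s, t]) @ [s, s] @ v) ((u @ [s, t]) @ v)" using assms by (intro cancel)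
  have "D_eq n (u @ [s, t] @ v) (u @ [s, t, s, s] @ v)" using D_sym[OF b] by simp
  also have "D_eq n \<dots> (u @ [t, t, s, t, s, s] @ v)" using D_sym[OF a] by simp
  also have "D_eq n \<dots> (u @ [t, s] @ v)" using r by simp
  finally show ?thesis .
qed

lemma braid:
  assumes "valid_gen n s" "valid_gen n t" "cox_m s t = 3"
  shows "D_eq n (u @ [s, t, s] @ v) (u @ [t, s, t] @ v)"
proof -
  have "relator n [s, t, s, t, s, t]" unfolding relator_def using assms
    by (rule_tac x=s in exI, rule_tac x=t in exI) (simp add: numeral_3_eq_3)
  then have r: "D_eq n (u @ [s, t, s, t, s, t] @ ([t, s, t] @ v)) (u @ ([t, s, t] @ v))" by (rule D_rel)
  have a: "D_eq n ((u @ [s, t, s, t]) @ [s, s] @ ([t] @ v)) ((u @ [s, t, s, t]) @ ([t] @ v))" using assms by (intro cancel)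
  have b: "D_eq n ((u @ [s, t, s]) @ [t, t] @ v) ((u @ [s, t, s]) @ v)" using assms by (intro cancel)
  have c: "D_eq n ((u @ [s, t, s, t, s]) @ [t, t] @ ([s, t] @ v)) ((u @ [s, t, s, t, s]) @ ([s, t] @ v))" using assms by (intro cancel)
  have "D_eq n (u @ [s, t, s] @ v) (u @ [s, t, s, t, t] @ v)" using D_sym[OF b] by simp
  also have "D_eq n \<dots> (u @ [s, t, s, t, s, s, t] @ v)" using D_sym[OF a] by simp
  also have "D_eq n \<dots> (u @ [s, t, s, t, s, t, t, s, t] @ v)" using D_sym[OF c] by simp
  also have "D_eq n \<dots> (u @ [t, s, t] @ v)" using r by simp
  finally show ?thesis .
qed

lemma D_app: "D_eq n u v \<Longrightarrow> D_eq n (a @ u @ b) (a @ v @ b)"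
  by (rule D_cong)

lemma comm_word:
  assumes "valid_gen n s" "\<forall>x\<in>set X. valid_gen n x \<and> cox_m x s = 2"
  shows "D_eq n (X @ [s]) ([s] @ X)"
  using assms(2)
proof (induction X)
  case Nil then show ?case by (simp add: D_refl)
next
  case (Cons x X)
  have "D_eq n ([x] @ (X @ [s]) @ []) ([x] @ ([s] @ X) @ [])" using Cons by (intro D_cong) simp
  then have "D_eq n ((x # X) @ [s]) ([x, s] @ X)" by simp
  also have "D_eq n \<dots> ([s] @ (x # X))" using comm[of n x s "[]" X] Cons assms(1) by simp
  finally show ?case .
qed

lemma wL_Suc: "1 \<le> L \<Longrightarrow> wL (Suc L) = [S (Suc L)] @ wL L @ [S (Suc L)]"
  by (simp add: wL_def)

lemma wL_set: "x \<in> set (wL L) \<Longrightarrow> x = S 1 \<or> x = S' \<or> (\<exists>i. x = S i \<and> 2 \<le> i \<and> i \<le> L)"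
  by (auto simp: wL_def)

lemma wL_1: "wL 1 = [S 1, S']" by (simp add: wL_def)


lemma part3:
  assumes "2 \<le> k" "k < L" "L \<le> n - 1"
  shows "D_eq n (wL L @ [S k]) ([S k] @ wL L)"
  using assms
proof (induction L)
  case 0 then show ?case by simp
next
  case (Suc L)
  have vk: "valid_gen n (S k)" "valid_gen n (S (Suc L))" using Suc.prems by (auto simp: valid_gen_def)
  show ?case
  proof (cases "L = k")
    case True
    obtain j where j: "k = Suc j" "1 \<le> j" using Suc.prems by (cases k) auto
    define X where "X = wL j"
    have wk: "wL k = [S k] @ X @ [S k]" using j wL_Suc X_def by simp
    have wk1: "wL (Suc L) = [S (Suc k), S k] @ X @ [S k, S (Suc k)]" using True wk wL_Suc[of k] j by simp
    have cX: "D_eq n (X @ [S (Suc k)]) ([S (Suc k)] @ X)"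
    proof (rule comm_word)
      show "valid_gen n (S (Suc k))" using vk True by simp
      show "\<forall>x\<in>set X. valid_gen n x \<and> cox_m x (S (Suc k)) = 2"
      proof
        fix x assume "x \<in> set X"
        then have "x = S 1 \<or> x = S' \<or> (\<exists>i. x = S i \<and> 2 \<le> i \<and> i \<le> j)" using wL_set X_def by simp
        then show "valid_gen n x \<and> cox_m x (S (Suc k)) = 2" using j Suc.prems True
          by (auto simp: valid_gen_def)
      qed
    qed
    have b1: "cox_m (S k) (S (Suc k)) = 3" "cox_m (S (Suc k)) (S k) = 3" by auto
    have "D_eq n (wL (Suc L) @ [S k]) ([S (Suc k), S k] @ X @ [S k, S (Suc k), S k])" using wk1 by (simp add: D_refl)
    also have "D_eq n \<dots> ([S (Suc k), S k] @ X @ [S (Suc k), S k, S (Suc k)])"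
      using braid[of n "S k" "S (Suc k)" "[S (Suc k), S k] @ X" "[]"] vk True b1 by simp
    also have "D_eq n \<dots> ([S (Suc k), S k] @ (X @ [S (Suc k)]) @ [S k, S (Suc k)])" by (simp add: D_refl)
    also have "D_eq n \<dots> ([S (Suc k), S k] @ ([S (Suc k)] @ X) @ [S k, S (Suc k)])" using cX by (rule D_cong)
    also have "D_eq n \<dots> ([] @ [S (Suc k), S k, S (Suc k)] @ (X @ [S k, S (Suc k)]))" by (simp add: D_refl)
    also have "D_eq n \<dots> ([] @ [S k, S (Suc k), S k] @ (X @ [S k, S (Suc k)]))"
      using braid[of n "S (Suc k)" "S k" "[]" "X @ [S k, S (Suc k)]"] vk True b1 by simp
    also have "D_eq n \<dots> ([S k] @ wL (Suc L))" using wk1 by (simp add: D_refl)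
    finally show ?thesis .
  next
    case False
    then have kL: "k < L" "L \<le> n - 1" using Suc.prems by auto
    have IH: "D_eq n (wL L @ [S k]) ([S k] @ wL L)" using Suc.IH Suc.prems kL by simp
    have w: "wL (Suc L) = [S (Suc L)] @ wL L @ [S (Suc L)]" using wL_Suc kL Suc.prems by simp
    have c: "cox_m (S (Suc L)) (S k) = 2" "cox_m (S k) (S (Suc L)) = 2" using kL by auto
    have "D_eq n (wL (Suc L) @ [S k]) (([S (Suc L)] @ wL L) @ [S (Suc L), S k] @ [])" using w by (simp add: D_refl)
    also have "D_eq n \<dots> (([S (Suc L)] @ wL L) @ [S k, S (Suc L)] @ [])"
      using comm vk c by blast
    also have "D_eq n \<dots> ([S (Suc L)] @ (wL L @ [S k]) @ [S (Suc L)])" by (simp add: D_refl)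
    also have "D_eq n \<dots> ([S (Suc L)] @ ([S k] @ wL L) @ [S (Suc L)])" using IH by (rule D_cong)
    also have "D_eq n \<dots> ([] @ [S (Suc L), S k] @ (wL L @ [S (Suc L)]))" by (simp add: D_refl)
    also have "D_eq n \<dots> ([] @ [S k, S (Suc L)] @ (wL L @ [S (Suc L)]))"
      using comm vk c by blast
    also have "D_eq n \<dots> ([S k] @ wL (Suc L))" using w by (simp add: D_refl)
    finally show ?thesis .
  qed
qed

lemma part12:
  assumes "2 \<le> L" "L \<le> n - 1"
  shows "D_eq n (wL L @ [S 1]) ([S'] @ wL L) \<and> D_eq n (wL L @ [S']) ([S 1] @ wL L)"
  using assms
proof (induction L)
  case 0 then show ?case by simp
next
  case (Suc L)
  have va: "valid_gen n (S 1)" "valid_gen n S'" "valid_gen n (S (Suc L))" using Suc.prems by (auto simp: valid_gen_def)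
  show ?case
  proof (cases "L = 1")
    case True
    have v2: "valid_gen n (S 2)" using Suc.prems True by (simp add: valid_gen_def)
    have w: "wL (Suc L) = [S 2, S 1, S', S 2]" using True by (simp add: wL_def)
    have p1: "D_eq n (wL (Suc L) @ [S 1]) ([S'] @ wL (Suc L))"
    proof -
      have "D_eq n (wL (Suc L) @ [S 1]) ([S 2] @ [S 1, S'] @ [S 2, S 1])" using w by (simp add: D_refl)
      also have "D_eq n \<dots> ([S 2] @ [S', S 1] @ [S 2, S 1])" using comm[of n "S 1" S' "[S 2]" "[S 2, S 1]"] va by simp
      also have "D_eq n \<dots> ([S 2, S'] @ [S 1, S 2, S 1] @ [])" by (simp add: D_refl)
      also have "D_eq n \<dots> ([S 2, S'] @ [S 2, S 1, S 2] @ [])" using braid[of n "S 1" "S 2" "[S 2, S']" "[]"] va v2 by simp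
      also have "D_eq n \<dots> ([] @ [S 2, S', S 2] @ [S 1, S 2])" by (simp add: D_refl)
      also have "D_eq n \<dots> ([] @ [S', S 2, S'] @ [S 1, S 2])" using braid[of n "S 2" S' "[]" "[S 1, S 2]"] va v2 by simp
      also have "D_eq n \<dots> ([S', S 2] @ [S', S 1] @ [S 2])" by (simp add: D_refl)
      also have "D_eq n \<dots> ([S', S 2] @ [S 1, S'] @ [S 2])" using comm[of n S' "S 1" "[S', S 2]" "[S 2]"] va by simp
      also have "D_eq n \<dots> ([S'] @ wL (Suc L))" using w by (simp add: D_refl)
      finally show ?thesis .
    qed
    have p2: "D_eq n (wL (Suc L) @ [S']) ([S 1] @ wL (Suc L))"
    proof -
      have "D_eq n (wL (Suc L) @ [S']) ([S 2, S 1] @ [S', S 2, S'] @ [])" using w by (simp add: D_refl)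
      also have "D_eq n \<dots> ([S 2, S 1] @ [S 2, S', S 2] @ [])" using braid[of n S' "S 2" "[S 2, S 1]" "[]"] va v2 by simp
      also have "D_eq n \<dots> ([] @ [S 2, S 1, S 2] @ [S', S 2])" by (simp add: D_refl)
      also have "D_eq n \<dots> ([] @ [S 1, S 2, S 1] @ [S', S 2])" using braid[of n "S 2" "S 1" "[]" "[S', S 2]"] va v2 by simp
      also have "D_eq n \<dots> ([S 1] @ wL (Suc L))" using w by (simp add: D_refl)
      finally show ?thesis .
    qed
    show ?thesis using p1 p2 by simp
  next
    case False
    then have kL: "2 \<le> L" "L \<le> n - 1" using Suc.prems by auto
    have IH: "D_eq n (wL L @ [S 1]) ([S'] @ wL L)" "D_eq n (wL L @ [S']) ([S 1] @ wL L)"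
      using Suc.IH kL by auto
    have w: "wL (Suc L) = [S (Suc L)] @ wL L @ [S (Suc L)]" using wL_Suc kL by simp
    have c: "cox_m (S (Suc L)) (S 1) = 2" "cox_m (S 1) (S (Suc L)) = 2"
       "cox_m (S (Suc L)) S' = 2" "cox_m S' (S (Suc L)) = 2" using kL by auto
    have gen: "D_eq n (wL (Suc L) @ [a]) ([b] @ wL (Suc L))"
      if ab: "valid_gen n a" "valid_gen n b" "cox_m (S (Suc L)) a = 2" "cox_m b (S (Suc L)) = 2"
         "D_eq n (wL L @ [a]) ([b] @ wL L)" for a b
    proof -
      have "D_eq n (wL (Suc L) @ [a]) (([S (Suc L)] @ wL L) @ [S (Suc L), a] @ [])" using w by (simp add: D_refl)
      also have "D_eq n \<dots> (([S (Suc L)] @ wL L) @ [a, S (Suc L)] @ [])"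
        using comm va ab by blast
      also have "D_eq n \<dots> ([S (Suc L)] @ (wL L @ [a]) @ [S (Suc L)])" by (simp add: D_refl)
      also have "D_eq n \<dots> ([S (Suc L)] @ ([b] @ wL L) @ [S (Suc L)])" using ab(5) by (rule D_cong)
      also have "D_eq n \<dots> ([] @ [S (Suc L), b] @ (wL L @ [S (Suc L)]))" by (simp add: D_refl)
      also have "D_eq n \<dots> ([] @ [b, S (Suc L)] @ (wL L @ [S (Suc L)]))"
        using comm va ab cox_sym by metis
      also have "D_eq n \<dots> ([b] @ wL (Suc L))" using w by (simp add: D_refl)
      finally show ?thesis .
    qed
    show ?thesis using gen[OF va(1) va(2)] gen[OF va(2) va(1)] IH c by simp
  qed
qed

theorem mainTheorem12:
  fixes n :: nat
  assumes "n \<ge> 2"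
  shows "(\<forall>L. 2 \<le> L \<and> L \<le> n - 1 \<longrightarrow> D_eq n (wL L @ [S 1]) ([S'] @ wL L))
       \<and> (\<forall>L. 2 \<le> L \<and> L \<le> n - 1 \<longrightarrow> D_eq n (wL L @ [S']) ([S 1] @ wL L))
       \<and> (\<forall>L k. 2 \<le> k \<and> k \<le> L - 1 \<and> L \<le> n - 1 \<longrightarrow> D_eq n (wL L @ [S k]) ([S k] @ wL L))"
  using part12 part3 by fastforce

end
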